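(* Let $N \ge 2$ and $1 \le M < N$ be integers, and let $K$ be an $N \times N$ real symmetric positive definite matrix. For an index set $\alpha \subset \{1,\dots,N\}$ with $|\alpha| = M$, let $\alpha^c = \{1,\dots,N\}\setminus\alpha$ and define the Schur complement $$K/K_{\alpha\alpha} \;=\; K_{\alpha^c\alpha^c} - K_{\alpha^c\alpha}\,K_{\alpha\alpha}^{-1}\,K_{\alpha\alpha^c},$$ an $(N-M)\times(N-M)$ symmetric positive definite matrix (rows and columns listed in increasing order of the indices in $\alpha^c$). Let $\mathcal{M} = \{K/K_{\alpha\alpha} : \alpha \subset \{1,\dots,N\},\ |\alpha| = M\}$, partially ordered by the Loewner order. Let $\alpha^*$ be an index set of size $M$ that maximizes $\operatorname{Tr}\big((K/K_{\alpha\alpha})^{-1}\big)$ over all index sets $\alpha$ of size $M$, and let $A^* = K/K_{\alpha^*\alpha^*}$. Then there is no $B \in \mathcal{M}$ with $A^* > B$, i.e. there is no $B \in \mathcal{M}$ such that $A^* - B$ is positive semidefinite and $A^* \neq B$.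
   Context: Loewner order on symmetric matrices of the same size: $A \le B$ iff $B - A$ is positive semidefinite; $A < B$ (equivalently $B > A$) means $A \le B$ and $A \ne B$. $K_{\beta\gamma}$ denotes the submatrix of $K$ with rows indexed by $\beta$ and columns indexed by $\gamma$. $\operatorname{Tr}$ denotes the trace. *)

theory Defs
  imports "Jordan_Normal_Form.Matrix" "Jordan_Normal_Form.DL_Submatrix"
begin

(* Indices are 0-based: {0..<N} plays the role of {1,...,N}. *)

definition sym_mat :: "real mat \<Rightarrow> bool" where
  "sym_mat A \<longleftrightarrow> dim_row A = dim_col A \<and> transpose_mat A = A"

definition psd_mat :: "real mat \<Rightarrow> bool" where
  "psd_mat A \<longleftrightarrow> sym_mat A \<and>
     (\<forall>v \<in> carrier_vec (dim_row A). v \<bullet> (A *\<^sub>v v) \<ge> 0)"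

definition pd_mat :: "real mat \<Rightarrow> bool" where
  "pd_mat A \<longleftrightarrow> sym_mat A \<and>
     (\<forall>v \<in> carrier_vec (dim_row A). v \<noteq> 0\<^sub>v (dim_row A) \<longrightarrow> v \<bullet> (A *\<^sub>v v) > 0)"

definition loewner_le :: "real mat \<Rightarrow> real mat \<Rightarrow> bool" where
  "loewner_le A B \<longleftrightarrow> sym_mat A \<and> sym_mat B \<and> dim_row A = dim_row B \<and> psd_mat (B - A)"

definition loewner_lt :: "real mat \<Rightarrow> real mat \<Rightarrow> bool" where
  "loewner_lt A B \<longleftrightarrow> loewner_le A B \<and> A \<noteq> B"

definition mtrace :: "real mat \<Rightarrow> real" where
  "mtrace A = (\<Sum>i<dim_row A. A $$ (i, i))"

definition minv :: "real mat \<Rightarrow> real mat" where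
  "minv A = (SOME B. B \<in> carrier_mat (dim_row A) (dim_row A) \<and>
                      A * B = 1\<^sub>m (dim_row A) \<and> B * A = 1\<^sub>m (dim_row A))"

(* Schur complement K / K_{alpha alpha}; submatrix lists indices in increasing order *)
definition schur :: "real mat \<Rightarrow> nat set \<Rightarrow> real mat" where
  "schur K \<alpha> = (let \<beta> = {0..<dim_row K} - \<alpha> in
     submatrix K \<beta> \<beta> - submatrix K \<beta> \<alpha> * minv (submatrix K \<alpha> \<alpha>) * submatrix K \<alpha> \<beta>)"

end

theory Submission
  imports Defs "Jordan_Normal_Form.Determinant"
begin

lemma sym_carrier: "sym_mat A \<Longrightarrow> A \<in> carrier_mat (dim_row A) (dim_row A)"
  unfolding sym_mat_def carrier_mat_def by auto

lemma pd_psd: assumes pd: "pd_mat A" shows "psd_mat A"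
  unfolding psd_mat_def
proof (intro conjI ballI)
  show "sym_mat A" using pd unfolding pd_mat_def by simp
  fix v :: "real vec" assume v: "v \<in> carrier_vec (dim_row A)"
  show "0 \<le> v \<bullet> (A *\<^sub>v v)"
  proof (cases "v = 0\<^sub>v (dim_row A)")
    case True
    have "A *\<^sub>v v \<in> carrier_vec (dim_row A)" by (rule carrier_vecI, simp)
    then have "0\<^sub>v (dim_row A) \<bullet> (A *\<^sub>v v) = 0" by (rule scalar_prod_left_zero)
    then show ?thesis using True by simp
  next
    case False
    then have "0 < v \<bullet> (A *\<^sub>v v)" using pd v unfolding pd_mat_def by blast
    then show ?thesis by simp
  qed
qed

lemma pd_det: assumes "pd_mat A" "A \<in> carrier_mat n n" shows "det A \<noteq> 0"
proof
  assume "det A = 0"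
  then obtain v where v: "v \<in> carrier_vec n" "v \<noteq> 0\<^sub>v n" "A *\<^sub>v v = 0\<^sub>v n"
    using det_0_iff_vec_prod_zero[OF assms(2)] by auto
  then have "0 < v \<bullet> (A *\<^sub>v v)" using assms unfolding pd_mat_def by auto
  then show False using v by simp
qed

lemma pd_minv: assumes "pd_mat A" "A \<in> carrier_mat n n"
  shows "minv A \<in> carrier_mat n n \<and> A * minv A = 1\<^sub>m n \<and> minv A * A = 1\<^sub>m n"
proof -
  have "A \<in> Units (ring_mat TYPE(real) n ())"
    by (rule det_non_zero_imp_unit[OF assms(2) pd_det[OF assms]])
  then obtain B where B: "B \<in> carrier_mat n n" "B * A = 1\<^sub>m n" "A * B = 1\<^sub>m n"
    unfolding Units_def ring_mat_def by auto
  have dr: "dim_row A = n" using assms(2) by auto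
  have "\<exists>B. B \<in> carrier_mat (dim_row A) (dim_row A) \<and> A * B = 1\<^sub>m (dim_row A) \<and> B * A = 1\<^sub>m (dim_row A)"
    using B dr by auto
  from someI_ex[OF this] show ?thesis unfolding minv_def dr .
qed

lemma minv_sym: assumes "pd_mat A" "A \<in> carrier_mat n n"
  shows "transpose_mat (minv A) = minv A"
proof -
  note m = pd_minv[OF assms]
  have At: "transpose_mat A = A" using assms(1) unfolding pd_mat_def sym_mat_def by auto
  have Ic: "minv A \<in> carrier_mat n n" using m by auto
  have "transpose_mat (minv A) * A = transpose_mat (transpose_mat A * minv A)"
    using transpose_mult[of "transpose_mat A" n n "minv A" n] Ic assms(2) by simp
  also have "\<dots> = 1\<^sub>m n" using At m by simp
  finally have 1: "transpose_mat (minv A) * A = 1\<^sub>m n" .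
  have "transpose_mat (minv A) = transpose_mat (minv A) * (A * minv A)"
    using m Ic by simp
  also have "\<dots> = (transpose_mat (minv A) * A) * minv A"
    using Ic assms(2) by (subst assoc_mult_mat[of _ n n _ n _ n], auto)
  also have "\<dots> = minv A" using 1 Ic by simp
  finally show ?thesis .
qed

lemma quad_transpose: fixes P D :: "real mat"
  assumes P: "P \<in> carrier_mat n m" and D: "D \<in> carrier_mat n n"
  and v: "v \<in> carrier_vec m"
  shows "v \<bullet> ((transpose_mat P * D * P) *\<^sub>v v) = (P *\<^sub>v v) \<bullet> (D *\<^sub>v (P *\<^sub>v v))"
proof -
  have "(transpose_mat P * D * P) *\<^sub>v v = transpose_mat P *\<^sub>v (D *\<^sub>v (P *\<^sub>v v))"
  proof -
    have "(transpose_mat P * D * P) *\<^sub>v v = (transpose_mat P * D) *\<^sub>v (P *\<^sub>v v)"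
      by (rule assoc_mult_mat_vec[of _ m n], insert P D v, auto)
    also have "\<dots> = transpose_mat P *\<^sub>v (D *\<^sub>v (P *\<^sub>v v))"
      by (rule assoc_mult_mat_vec[of _ m n _ n], insert P D v, auto)
    finally show ?thesis .
  qed
  moreover have "v \<bullet> (transpose_mat P *\<^sub>v (D *\<^sub>v (P *\<^sub>v v))) = (transpose_mat P *\<^sub>v (D *\<^sub>v (P *\<^sub>v v))) \<bullet> v"
    using comm_scalar_prod[of v m "transpose_mat P *\<^sub>v (D *\<^sub>v (P *\<^sub>v v))"] P D v by auto
  moreover have "\<dots> = (D *\<^sub>v (P *\<^sub>v v)) \<bullet> (P *\<^sub>v v)"
    by (rule transpose_vec_mult_scalar[OF P v], insert P D v, auto)
  moreover have "\<dots> = (P *\<^sub>v v) \<bullet> (D *\<^sub>v (P *\<^sub>v v))"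
    using comm_scalar_prod[of "D *\<^sub>v (P *\<^sub>v v)" n "P *\<^sub>v v"] P D v by auto
  ultimately show ?thesis by simp
qed

lemma sym_congr: fixes P D :: "real mat"
  assumes P: "P \<in> carrier_mat n m" and D: "D \<in> carrier_mat n n"
  and s: "transpose_mat D = D"
  shows "sym_mat (transpose_mat P * D * P)"
proof -
  have "transpose_mat (transpose_mat P * D * P) = transpose_mat P * transpose_mat (transpose_mat P * D)"
    using P D by (subst transpose_mult[of _ m n _ m], auto)
  also have "transpose_mat (transpose_mat P * D) = transpose_mat D * P"
    using P D by (subst transpose_mult[of _ m n _ n], auto)
  finally have "transpose_mat (transpose_mat P * D * P) = transpose_mat P * D * P"
    using P D s by (simp add: assoc_mult_mat[of _ m n _ n _ m])
  then show ?thesis unfolding sym_mat_def using P D by auto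
qed

lemma psd_congr: fixes P D :: "real mat"
  assumes P: "P \<in> carrier_mat n m" and D: "D \<in> carrier_mat n n"
  and ps: "psd_mat D"
  shows "psd_mat (transpose_mat P * D * P)"
proof -
  have s: "transpose_mat D = D" using ps unfolding psd_mat_def sym_mat_def by auto
  have c: "transpose_mat P * D * P \<in> carrier_mat m m" using P D by auto
  show ?thesis unfolding psd_mat_def
  proof (intro conjI ballI)
    show "sym_mat (transpose_mat P * D * P)" by (rule sym_congr[OF P D s])
    fix v :: "real vec" assume "v \<in> carrier_vec (dim_row (transpose_mat P * D * P))"
    then have v: "v \<in> carrier_vec m" using c by auto
    have "P *\<^sub>v v \<in> carrier_vec (dim_row D)" using P D v by auto
    then have "0 \<le> (P *\<^sub>v v) \<bullet> (D *\<^sub>v (P *\<^sub>v v))" using ps unfolding psd_mat_def by auto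
    then show "0 \<le> v \<bullet> ((transpose_mat P * D * P) *\<^sub>v v)" using quad_transpose[OF P D v] by simp
  qed
qed

lemma pd_congr: fixes P D :: "real mat"
  assumes P: "P \<in> carrier_mat n m" and D: "D \<in> carrier_mat n n"
  and ps: "pd_mat D" and hinj: "\<And>v. v \<in> carrier_vec m \<Longrightarrow> P *\<^sub>v v = 0\<^sub>v n \<Longrightarrow> v = 0\<^sub>v m"
  shows "pd_mat (transpose_mat P * D * P)"
proof -
  have s: "transpose_mat D = D" using ps unfolding pd_mat_def sym_mat_def by auto
  have c: "transpose_mat P * D * P \<in> carrier_mat m m" using P D by auto
  show ?thesis unfolding pd_mat_def
  proof (intro conjI ballI impI)
    show "sym_mat (transpose_mat P * D * P)" by (rule sym_congr[OF P D s])
    fix v :: "real vec" assume "v \<in> carrier_vec (dim_row (transpose_mat P * D * P))"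
      and nz: "v \<noteq> 0\<^sub>v (dim_row (transpose_mat P * D * P))"
    then have v: "v \<in> carrier_vec m" and nz: "v \<noteq> 0\<^sub>v m" using c by auto
    have "P *\<^sub>v v \<noteq> 0\<^sub>v n" using hinj[OF v] nz by auto
    moreover have "P *\<^sub>v v \<in> carrier_vec (dim_row D)" using P D v by auto
    ultimately have "0 < (P *\<^sub>v v) \<bullet> (D *\<^sub>v (P *\<^sub>v v))" using ps D unfolding pd_mat_def by auto
    then show "0 < v \<bullet> ((transpose_mat P * D * P) *\<^sub>v v)" using quad_transpose[OF P D v] by simp
  qed
qed


lemma mtrace_add: fixes A B :: "real mat"
  assumes "A \<in> carrier_mat n n" "B \<in> carrier_mat n n"
  shows "mtrace (A + B) = mtrace A + mtrace B"
  using assms unfolding mtrace_def by (simp add: sum.distrib)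

lemma mtrace_minus: fixes A B :: "real mat"
  assumes "A \<in> carrier_mat n n" "B \<in> carrier_mat n n"
  shows "mtrace (A - B) = mtrace A - mtrace B"
  using assms unfolding mtrace_def by (simp add: sum_subtractf)

lemma unit_quad: fixes M :: "real mat"
  assumes M: "M \<in> carrier_mat n n" and i: "i < n" and j: "j < n"
  shows "unit_vec n i \<bullet> (M *\<^sub>v unit_vec n j) = M $$ (i, j)"
proof -
  have "unit_vec n i \<bullet> (M *\<^sub>v unit_vec n j) = (M *\<^sub>v unit_vec n j) $ i"
    by (rule scalar_prod_left_unit, insert M i, auto)
  also have "\<dots> = row M i \<bullet> unit_vec n j" using M i by auto
  also have "\<dots> = M $$ (i, j)" using M i j by simp
  finally show ?thesis .
qed

lemma quad_expand: fixes M :: "real mat"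
  assumes M: "M \<in> carrier_mat n n" and u: "u \<in> carrier_vec n" and w: "w \<in> carrier_vec n"
  shows "(u + c \<cdot>\<^sub>v w) \<bullet> (M *\<^sub>v (u + c \<cdot>\<^sub>v w)) =
    u \<bullet> (M *\<^sub>v u) + c * (u \<bullet> (M *\<^sub>v w)) + c * (w \<bullet> (M *\<^sub>v u)) + c * c * (w \<bullet> (M *\<^sub>v w))"
proof -
  have cw: "c \<cdot>\<^sub>v w \<in> carrier_vec n" using w by auto
  have Mu: "M *\<^sub>v u \<in> carrier_vec n" and Mw: "M *\<^sub>v w \<in> carrier_vec n" using M u w by auto
  have "M *\<^sub>v (u + c \<cdot>\<^sub>v w) = M *\<^sub>v u + M *\<^sub>v (c \<cdot>\<^sub>v w)"
    by (rule mult_add_distrib_mat_vec[OF M u cw])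
  also have "M *\<^sub>v (c \<cdot>\<^sub>v w) = c \<cdot>\<^sub>v (M *\<^sub>v w)" by (rule mult_mat_vec[OF M w])
  finally have e: "M *\<^sub>v (u + c \<cdot>\<^sub>v w) = M *\<^sub>v u + c \<cdot>\<^sub>v (M *\<^sub>v w)" .
  have cMw: "c \<cdot>\<^sub>v (M *\<^sub>v w) \<in> carrier_vec n" using Mw by auto
  have "(u + c \<cdot>\<^sub>v w) \<bullet> (M *\<^sub>v u + c \<cdot>\<^sub>v (M *\<^sub>v w)) =
      u \<bullet> (M *\<^sub>v u + c \<cdot>\<^sub>v (M *\<^sub>v w)) + (c \<cdot>\<^sub>v w) \<bullet> (M *\<^sub>v u + c \<cdot>\<^sub>v (M *\<^sub>v w))"
    by (rule add_scalar_prod_distrib[OF u cw], insert Mu cMw, auto)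
  also have "u \<bullet> (M *\<^sub>v u + c \<cdot>\<^sub>v (M *\<^sub>v w)) = u \<bullet> (M *\<^sub>v u) + u \<bullet> (c \<cdot>\<^sub>v (M *\<^sub>v w))"
    by (rule scalar_prod_add_distrib[OF u Mu cMw])
  also have "(c \<cdot>\<^sub>v w) \<bullet> (M *\<^sub>v u + c \<cdot>\<^sub>v (M *\<^sub>v w)) = (c \<cdot>\<^sub>v w) \<bullet> (M *\<^sub>v u) + (c \<cdot>\<^sub>v w) \<bullet> (c \<cdot>\<^sub>v (M *\<^sub>v w))"
    by (rule scalar_prod_add_distrib[OF cw Mu cMw])
  also have "u \<bullet> (c \<cdot>\<^sub>v (M *\<^sub>v w)) = c * (u \<bullet> (M *\<^sub>v w))" using u Mw by simp
  also have "(c \<cdot>\<^sub>v w) \<bullet> (M *\<^sub>v u) = c * (w \<bullet> (M *\<^sub>v u))" using w Mu by simp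
  also have "(c \<cdot>\<^sub>v w) \<bullet> (c \<cdot>\<^sub>v (M *\<^sub>v w)) = c * c * (w \<bullet> (M *\<^sub>v w))" using w Mw by simp
  finally show ?thesis unfolding e by simp
qed

lemma psd_diag: fixes M :: "real mat"
  assumes ps: "psd_mat M" and M: "M \<in> carrier_mat n n" and i: "i < n"
  shows "0 \<le> M $$ (i, i)"
proof -
  have "0 \<le> unit_vec n i \<bullet> (M *\<^sub>v unit_vec n i)" using ps M unfolding psd_mat_def by auto
  then show ?thesis using unit_quad[OF M i i] by simp
qed

lemma psd_offdiag: fixes M :: "real mat"
  assumes ps: "psd_mat M" and M: "M \<in> carrier_mat n n" and i: "i < n" and j: "j < n"
    and di: "M $$ (i, i) = 0" and dj: "M $$ (j, j) = 0"
  shows "M $$ (i, j) = 0"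
proof -
  have s: "M $$ (j, i) = M $$ (i, j)"
    using ps M i j unfolding psd_mat_def sym_mat_def by (metis index_transpose_mat(1) carrier_matD)
  have q: "0 \<le> M $$ (i, i) + c * M $$ (i, j) + c * M $$ (j, i) + c * c * M $$ (j, j)" for c
  proof -
    have "unit_vec n i + c \<cdot>\<^sub>v unit_vec n j \<in> carrier_vec (dim_row M)" using M by auto
    then have "0 \<le> (unit_vec n i + c \<cdot>\<^sub>v unit_vec n j) \<bullet> (M *\<^sub>v (unit_vec n i + c \<cdot>\<^sub>v unit_vec n j))"
      using ps unfolding psd_mat_def by auto
    then show ?thesis unfolding quad_expand[OF M unit_vec_carrier unit_vec_carrier]
      unit_quad[OF M i i] unit_quad[OF M i j] unit_quad[OF M j i] unit_quad[OF M j j] .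
  qed
  from q[of 1] q[of "-1"] show ?thesis using s di dj by simp
qed

lemma psd_trace_zero: fixes M :: "real mat"
  assumes ps: "psd_mat M" and M: "M \<in> carrier_mat n n" and t: "mtrace M = 0"
  shows "M = 0\<^sub>m n n"
proof -
  have t': "(\<Sum>i<n. M $$ (i, i)) = 0" using t M unfolding mtrace_def by auto
  have d: "M $$ (i, i) = 0" if "i < n" for i
    using sum_nonneg_eq_0_iff[of "{..<n}" "\<lambda>i. M $$ (i, i)"] t' psd_diag[OF ps M] that by auto
  show ?thesis
    by (rule eq_matI, insert M d psd_offdiag[OF ps M], auto)
qed

lemma sum_single: fixes f :: "nat \<Rightarrow> real" assumes "p < N"
  shows "(\<Sum>k\<in>{0..<N}. (if k = p then 1 else 0) * f k) = f p"
proof -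
  have "(\<Sum>k\<in>{0..<N}. (if k = p then 1 else 0) * f k) = (\<Sum>k\<in>{0..<N}. if k = p then f k else 0)"
    by (rule sum.cong, auto)
  then show ?thesis using assms by simp
qed

lemma sum_single': fixes f :: "nat \<Rightarrow> real" assumes "p < N"
  shows "(\<Sum>k\<in>{0..<N}. f k * (if k = p then 1 else 0)) = f p"
proof -
  have "(\<Sum>k\<in>{0..<N}. f k * (if k = p then 1 else 0)) = (\<Sum>k\<in>{0..<N}. if k = p then f k else 0)"
    by (rule sum.cong, auto)
  then show ?thesis using assms by simp
qed

lemma pick_facts: assumes I: "I \<subseteq> {0..<N}" and j: "j < card I"
  shows "pick I j \<in> I" "pick I j < N"
  using pick_in_set_le[OF j] I by auto

lemma pick_inj: assumes "i < card I" "j < card I" "pick I i = pick I j" shows "i = j"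
  using card_pick_le[OF assms(1)] card_pick_le[OF assms(2)] assms(3) by metis

definition sel :: "nat \<Rightarrow> nat set \<Rightarrow> real mat" where
  "sel N I = mat N (card I) (\<lambda>(k, j). if k = pick I j then 1 else 0)"

lemma sel_carrier[simp]: "sel N I \<in> carrier_mat N (card I)"
  unfolding sel_def by simp

lemma sel_dims[simp]: "dim_row (sel N I) = N" "dim_col (sel N I) = card I"
  unfolding sel_def by simp_all

lemma selT_mult: assumes I: "I \<subseteq> {0..<N}" and X: "X \<in> carrier_mat N c"
  shows "transpose_mat (sel N I) * X = mat (card I) c (\<lambda>(i, l). X $$ (pick I i, l))"
proof (rule eq_matI)
  fix i l assume i: "i < dim_row (mat (card I) c (\<lambda>(i, l). X $$ (pick I i, l)))"
    and l: "l < dim_col (mat (card I) c (\<lambda>(i, l). X $$ (pick I i, l)))"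
  then have i: "i < card I" and l: "l < c" by auto
  have "(transpose_mat (sel N I) * X) $$ (i, l) = row (transpose_mat (sel N I)) i \<bullet> col X l"
    using i l X by simp
  also have "\<dots> = (\<Sum>k\<in>{0..<N}. (if k = pick I i then 1 else 0) * X $$ (k, l))"
    unfolding scalar_prod_def using i l X by (intro sum.cong, auto simp: sel_def)
  also have "\<dots> = X $$ (pick I i, l)" by (rule sum_single[OF pick_facts(2)[OF I i]])
  finally show "(transpose_mat (sel N I) * X) $$ (i, l) = mat (card I) c (\<lambda>(i, l). X $$ (pick I i, l)) $$ (i, l)"
    using i l by simp
qed (use X in auto)

lemma mult_sel: assumes J: "J \<subseteq> {0..<N}" and X: "X \<in> carrier_mat r N"
  shows "X * sel N J = mat r (card J) (\<lambda>(k, j). X $$ (k, pick J j))"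
proof (rule eq_matI)
  fix k j assume k: "k < dim_row (mat r (card J) (\<lambda>(k, j). X $$ (k, pick J j)))"
    and j: "j < dim_col (mat r (card J) (\<lambda>(k, j). X $$ (k, pick J j)))"
  then have k: "k < r" and j: "j < card J" by auto
  have "(X * sel N J) $$ (k, j) = row X k \<bullet> col (sel N J) j"
    using k j X by simp
  also have "\<dots> = (\<Sum>l\<in>{0..<N}. X $$ (k, l) * (if l = pick J j then 1 else 0))"
    unfolding scalar_prod_def using k j X by (intro sum.cong, auto simp: sel_def)
  also have "\<dots> = X $$ (k, pick J j)" by (rule sum_single'[OF pick_facts(2)[OF J j]])
  finally show "(X * sel N J) $$ (k, j) = mat r (card J) (\<lambda>(k, j). X $$ (k, pick J j)) $$ (k, j)"
    using k j by simp
qed (use X in auto)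

lemma sub_eq: assumes K: "K \<in> carrier_mat N N" and I: "I \<subseteq> {0..<N}" and J: "J \<subseteq> {0..<N}"
  shows "submatrix K I J = transpose_mat (sel N I) * K * sel N J"
proof -
  have cI: "{i. i < dim_row K \<and> i \<in> I} = I" and cJ: "{j. j < dim_col K \<and> j \<in> J} = J"
    using K I J by auto
  have "transpose_mat (sel N I) * K * sel N J = mat (card I) N (\<lambda>(i, l). K $$ (pick I i, l)) * sel N J"
    by (subst selT_mult[OF I K], rule refl)
  also have "\<dots> = mat (card I) (card J) (\<lambda>(i, j). K $$ (pick I i, pick J j))"
    by (subst mult_sel[OF J, of _ "card I"], auto intro!: eq_matI simp: pick_facts[OF J])
  finally show ?thesis unfolding submatrix_def cI cJ by simp
qed

lemma selT_sel: assumes I: "I \<subseteq> {0..<N}"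
  shows "transpose_mat (sel N I) * sel N I = 1\<^sub>m (card I)"
  unfolding selT_mult[OF I sel_carrier]
  by (rule eq_matI, auto simp: sel_def pick_facts[OF I] dest: pick_inj)

lemma selT_sel_disj: assumes I: "I \<subseteq> {0..<N}" and J: "J \<subseteq> {0..<N}" and d: "I \<inter> J = {}"
  shows "transpose_mat (sel N I) * sel N J = 0\<^sub>m (card I) (card J)"
proof -
  have "pick I i \<noteq> pick J j" if "i < card I" "j < card J" for i j
    using pick_facts(1)[OF I that(1)] pick_facts(1)[OF J that(2)] d by auto
  then show ?thesis unfolding selT_mult[OF I sel_carrier]
    by (intro eq_matI, auto simp: sel_def pick_facts[OF I])
qed

lemma left_inv_inj: fixes L T :: "real mat"
  assumes L: "L \<in> carrier_mat m n" and T: "T \<in> carrier_mat n m" and LT: "L * T = 1\<^sub>m m"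
    and v: "v \<in> carrier_vec m" and z: "T *\<^sub>v v = 0\<^sub>v n"
  shows "v = 0\<^sub>v m"
proof -
  have "v = (L * T) *\<^sub>v v" using LT v by simp
  also have "\<dots> = L *\<^sub>v (T *\<^sub>v v)" using L T v by simp
  also have "\<dots> = 0\<^sub>v m" unfolding z using L by auto
  finally show ?thesis .
qed

lemma sub_transpose: fixes K :: "real mat"
  assumes K: "K \<in> carrier_mat N N" and s: "transpose_mat K = K"
  shows "transpose_mat (submatrix K I J) = submatrix K J I"
proof -
  have "K $$ (i, j) = K $$ (j, i)" if "i < N" "j < N" for i j
    using s K that by (metis carrier_matD index_transpose_mat(1))
  then show ?thesis using K
    by (intro eq_matI, auto simp: submatrix_def intro!: pick_le)
qed

lemma schur_pd: assumes K: "K \<in> carrier_mat N N" and pdK: "pd_mat K" and al: "\<alpha> \<subseteq> {0..<N}"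
  shows "pd_mat (schur K \<alpha>) \<and> schur K \<alpha> \<in> carrier_mat (N - card \<alpha>) (N - card \<alpha>)"
proof -
  define \<beta> where "\<beta> = {0..<N} - \<alpha>"
  define a where "a = card \<alpha>"
  define b where "b = card \<beta>"
  have be: "\<beta> \<subseteq> {0..<N}" and dis: "\<beta> \<inter> \<alpha> = {}" unfolding \<beta>_def by auto
  have bN: "b = N - a" unfolding b_def a_def \<beta>_def using al by (simp add: card_Diff_subset finite_subset)
  define Sa where "Sa = sel N \<alpha>"
  define Sb where "Sb = sel N \<beta>"
  have Sa: "Sa \<in> carrier_mat N a" and Sb: "Sb \<in> carrier_mat N b"
    unfolding Sa_def Sb_def a_def b_def by auto
  have SaT: "transpose_mat Sa \<in> carrier_mat a N" and SbT: "transpose_mat Sb \<in> carrier_mat b N"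
    using Sa Sb by auto
  define Kaa where "Kaa = submatrix K \<alpha> \<alpha>"
  define Kab where "Kab = submatrix K \<alpha> \<beta>"
  define Kba where "Kba = submatrix K \<beta> \<alpha>"
  define Kbb where "Kbb = submatrix K \<beta> \<beta>"
  have eaa: "Kaa = transpose_mat Sa * K * Sa" unfolding Kaa_def Sa_def by (rule sub_eq[OF K al al])
  have eab: "Kab = transpose_mat Sa * K * Sb" unfolding Kab_def Sa_def Sb_def by (rule sub_eq[OF K al be])
  have eba: "Kba = transpose_mat Sb * K * Sa" unfolding Kba_def Sa_def Sb_def by (rule sub_eq[OF K be al])
  have ebb: "Kbb = transpose_mat Sb * K * Sb" unfolding Kbb_def Sb_def by (rule sub_eq[OF K be be])
  have sK: "transpose_mat K = K" using pdK unfolding pd_mat_def sym_mat_def by auto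
  have tab: "transpose_mat Kab = Kba" unfolding Kab_def Kba_def by (rule sub_transpose[OF K sK])
  have cSaTK: "transpose_mat Sa * K \<in> carrier_mat a N" and cSbTK: "transpose_mat Sb * K \<in> carrier_mat b N"
    using SaT SbT K by auto
  have Kaa: "Kaa \<in> carrier_mat a a" and Kab: "Kab \<in> carrier_mat a b"
    and Kba: "Kba \<in> carrier_mat b a" and Kbb: "Kbb \<in> carrier_mat b b"
    unfolding eaa eab eba ebb using SaT SbT Sa Sb K by auto
  have SaTSa: "transpose_mat Sa * Sa = 1\<^sub>m a" unfolding Sa_def a_def by (rule selT_sel[OF al])
  have SbTSb: "transpose_mat Sb * Sb = 1\<^sub>m b" unfolding Sb_def b_def by (rule selT_sel[OF be])
  have SbTSa: "transpose_mat Sb * Sa = 0\<^sub>m b a" unfolding Sa_def Sb_def a_def b_def by (rule selT_sel_disj[OF be al dis])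
  have pdKaa: "pd_mat Kaa" unfolding eaa
    by (rule pd_congr[OF Sa K pdK], rule left_inv_inj[OF SaT Sa SaTSa])
  define Y where "Y = minv Kaa"
  note mY = pd_minv[OF pdKaa Kaa, folded Y_def]
  have Y: "Y \<in> carrier_mat a a" using mY by auto
  have sY: "transpose_mat Y = Y" unfolding Y_def by (rule minv_sym[OF pdKaa Kaa])
  define W where "W = Y * Kab"
  have W: "W \<in> carrier_mat a b" unfolding W_def using Y Kab by auto
  have WT: "transpose_mat W = Kba * Y" unfolding W_def
    using transpose_mult[OF Y Kab] tab sY by simp
  define Z where "Z = Sa * W"
  have Z: "Z \<in> carrier_mat N b" unfolding Z_def using Sa W by auto
  have ZT: "transpose_mat Z = Kba * Y * transpose_mat Sa" unfolding Z_def
    using transpose_mult[OF Sa W] WT by simp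
  define T where "T = Sb - Z"
  have T: "T \<in> carrier_mat N b" unfolding T_def using Sb Z by auto
  define Q where "Q = Kba * Y * Kab"
  have Q: "Q \<in> carrier_mat b b" unfolding Q_def using Kba Y Kab by auto
  have KbaY: "Kba * Y \<in> carrier_mat b a" using Kba Y by auto
  have WTKab: "(Kba * Y) * Kab = Q" unfolding Q_def ..
  have SbTZ: "transpose_mat Sb * Z = 0\<^sub>m b b"
  proof -
    have "transpose_mat Sb * Z = (transpose_mat Sb * Sa) * W"
      unfolding Z_def by (rule assoc_mult_mat[OF SbT Sa W, symmetric])
    also have "\<dots> = 0\<^sub>m b b" unfolding SbTSa using W by simp
    finally show ?thesis .
  qed
  have SbTT: "transpose_mat Sb * T = 1\<^sub>m b"
  proof -
    have "transpose_mat Sb * T = transpose_mat Sb * Sb - transpose_mat Sb * Z"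
      unfolding T_def by (rule mult_minus_distrib_mat[OF SbT Sb Z])
    also have "\<dots> = 1\<^sub>m b" unfolding SbTSb SbTZ by (intro eq_matI, auto)
    finally show ?thesis .
  qed
  have pdT: "pd_mat (transpose_mat T * K * T)"
    by (rule pd_congr[OF T K pdK], rule left_inv_inj[OF SbT T SbTT])
  have ZTc: "transpose_mat Z \<in> carrier_mat b N" using Z by auto
  have cSbTK': "transpose_mat Z * K \<in> carrier_mat b N" using ZTc K by auto
  have tT: "transpose_mat T = transpose_mat Sb - transpose_mat Z"
    unfolding T_def by (rule transpose_minus[OF Sb Z])
  have ea: "transpose_mat T * K = transpose_mat Sb * K - transpose_mat Z * K"
    unfolding tT by (rule minus_mult_distrib_mat[OF SbT ZTc K])
  have eb: "transpose_mat T * K * T = (transpose_mat Sb * K - transpose_mat Z * K) * Sb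
      - (transpose_mat Sb * K - transpose_mat Z * K) * Z"
  proof -
    have "transpose_mat T * K * T = (transpose_mat Sb * K - transpose_mat Z * K) * (Sb - Z)"
      by (simp only: ea T_def[symmetric])
    also have "\<dots> = (transpose_mat Sb * K - transpose_mat Z * K) * Sb
      - (transpose_mat Sb * K - transpose_mat Z * K) * Z"
      by (rule mult_minus_distrib_mat[OF minus_carrier_mat[OF cSbTK'] Sb Z])
    finally show ?thesis .
  qed
  have ec: "(transpose_mat Sb * K - transpose_mat Z * K) * Sb = transpose_mat Sb * K * Sb - transpose_mat Z * K * Sb"
    by (rule minus_mult_distrib_mat[OF cSbTK cSbTK' Sb])
  have ed: "(transpose_mat Sb * K - transpose_mat Z * K) * Z = transpose_mat Sb * K * Z - transpose_mat Z * K * Z"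
    by (rule minus_mult_distrib_mat[OF cSbTK cSbTK' Z])
  have v1: "transpose_mat Sb * K * Sb = Kbb" using ebb by simp
  have ZTK: "transpose_mat Z * K = Kba * Y * (transpose_mat Sa * K)"
    unfolding ZT by (rule assoc_mult_mat[OF KbaY SaT K])
  have v2: "transpose_mat Z * K * Sb = Q"
  proof -
    have "transpose_mat Z * K * Sb = Kba * Y * (transpose_mat Sa * K * Sb)"
      unfolding ZTK by (rule assoc_mult_mat[OF KbaY cSaTK Sb])
    then show ?thesis unfolding eab[symmetric] WTKab .
  qed
  have v3: "transpose_mat Sb * K * Z = Q"
  proof -
    have "transpose_mat Sb * K * Z = (transpose_mat Sb * K * Sa) * W"
      unfolding Z_def by (rule assoc_mult_mat[OF cSbTK Sa W, symmetric])
    also have "\<dots> = Kba * (Y * Kab)" unfolding eba[symmetric] W_def ..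
    also have "\<dots> = Q" unfolding Q_def by (rule assoc_mult_mat[OF Kba Y Kab, symmetric])
    finally show ?thesis .
  qed
  have v4: "transpose_mat Z * K * Z = Q"
  proof -
    have KaaW: "Kaa * W = Kab"
    proof -
      have "Kaa * W = (Kaa * Y) * Kab" unfolding W_def by (rule assoc_mult_mat[OF Kaa Y Kab, symmetric])
      also have "\<dots> = Kab" using mY Kab by simp
      finally show ?thesis .
    qed
    have "transpose_mat Sa * K * Z = Kaa * W"
      unfolding Z_def eaa by (rule assoc_mult_mat[OF cSaTK Sa W, symmetric])
    then have e: "transpose_mat Sa * K * Z = Kab" using KaaW by simp
    have "transpose_mat Z * K * Z = Kba * Y * (transpose_mat Sa * K * Z)"
      unfolding ZTK by (rule assoc_mult_mat[OF KbaY cSaTK Z])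
    then show ?thesis unfolding e WTKab .
  qed
  have eq: "transpose_mat T * K * T = Kbb - Q"
    unfolding eb ec ed v1 v2 v3 v4 using Kbb Q by (intro eq_matI, auto)
  have sch: "schur K \<alpha> = Kbb - Q"
    unfolding schur_def Let_def Q_def Kbb_def Kba_def Kab_def Y_def Kaa_def \<beta>_def using K by simp
  have "Kbb - Q \<in> carrier_mat b b" by (rule minus_carrier_mat[OF Q])
  then show ?thesis using pdT eq sch bN a_def by simp
qed

lemma psd_trace_nonneg: fixes M :: "real mat"
  assumes ps: "psd_mat M" and M: "M \<in> carrier_mat n n"
  shows "0 \<le> mtrace M"
  unfolding mtrace_def using M psd_diag[OF ps M] by (auto intro: sum_nonneg)

lemma minv_psd: fixes B :: "real mat"
  assumes pd: "pd_mat B" and B: "B \<in> carrier_mat n n"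
  shows "psd_mat (minv B)"
proof -
  note m = pd_minv[OF pd B]
  have Bi: "minv B \<in> carrier_mat n n" using m by auto
  have "transpose_mat (minv B) * B * minv B = minv B"
    using minv_sym[OF pd B] m Bi B by simp
  moreover have "psd_mat (transpose_mat (minv B) * B * minv B)"
    by (rule psd_congr[OF Bi B pd_psd[OF pd]])
  ultimately show ?thesis by simp
qed

lemma loewner_trace: fixes A B :: "real mat"
  assumes A: "A \<in> carrier_mat n n" and B: "B \<in> carrier_mat n n"
    and pdA: "pd_mat A" and pdB: "pd_mat B" and psD: "psd_mat (A - B)" and ne: "A \<noteq> B"
  shows "mtrace (minv A) < mtrace (minv B)"
proof -
  define D where "D = A - B"
  define Ai where "Ai = minv A"
  define Bi where "Bi = minv B"
  have D: "D \<in> carrier_mat n n" unfolding D_def using A B by auto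
  note mA = pd_minv[OF pdA A, folded Ai_def]
  note mB = pd_minv[OF pdB B, folded Bi_def]
  have Ai: "Ai \<in> carrier_mat n n" and Bi: "Bi \<in> carrier_mat n n" using mA mB by auto
  have sA: "transpose_mat Ai = Ai" unfolding Ai_def by (rule minv_sym[OF pdA A])
  have sD: "transpose_mat D = D" using psD unfolding D_def psd_mat_def sym_mat_def by auto
  have psD': "psd_mat D" using psD unfolding D_def .
  have e1: "Bi - Ai = Ai * D * Bi"
  proof -
    have "Ai * D * Bi = (Ai * A - Ai * B) * Bi" unfolding D_def
      using Ai A B by (simp add: mult_minus_distrib_mat[of _ n n])
    also have "\<dots> = Ai * A * Bi - Ai * B * Bi"
      using Ai A B Bi by (simp add: minus_mult_distrib_mat[of _ n n])
    also have "\<dots> = Bi - Ai" using Ai A B Bi mA mB by (simp add: assoc_mult_mat[OF Ai B Bi] left_mult_one_mat[OF Bi] right_mult_one_mat[OF Ai])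
    finally show ?thesis by simp
  qed
  have e2: "Bi - Ai = Bi * D * Ai"
  proof -
    have "Bi * D * Ai = (Bi * A - Bi * B) * Ai" unfolding D_def
      using Bi A B by (simp add: mult_minus_distrib_mat[of _ n n])
    also have "\<dots> = Bi * A * Ai - Bi * B * Ai"
      using Ai A B Bi by (simp add: minus_mult_distrib_mat[of _ n n])
    also have "\<dots> = Bi - Ai" using Ai A B Bi mA mB by (simp add: assoc_mult_mat[OF Bi A Ai] left_mult_one_mat[OF Ai] right_mult_one_mat[OF Bi])
    finally show ?thesis by simp
  qed
  have BiAi: "Bi = Ai + Bi * D * Ai"
  proof -
    have "Ai + (Bi - Ai) = Bi" using Ai Bi by (intro eq_matI, auto)
    then show ?thesis unfolding e2 by simp
  qed
  have e3: "Bi - Ai = Ai * D * Ai + Ai * D * (Bi * D * Ai)"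
  proof -
    have "Ai * D * Bi = Ai * D * (Ai + Bi * D * Ai)" using BiAi by simp
    also have "\<dots> = Ai * D * Ai + Ai * D * (Bi * D * Ai)"
      using Ai D Bi by (subst mult_add_distrib_mat[of _ n n], auto)
    finally show ?thesis using e1 by simp
  qed
  have ps1: "psd_mat (Ai * D * Ai)"
    using psd_congr[OF Ai D psD'] sA by simp
  have ps2: "psd_mat (Ai * D * (Bi * D * Ai))"
  proof -
    have DA: "D * Ai \<in> carrier_mat n n" using D Ai by auto
    have tr: "transpose_mat (D * Ai) = Ai * D"
      using transpose_mult[of D n n Ai n] D Ai sA sD by simp
    have "psd_mat (transpose_mat (D * Ai) * Bi * (D * Ai))"
      by (rule psd_congr[OF DA Bi], unfold Bi_def, rule minv_psd[OF pdB B])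
    moreover have "transpose_mat (D * Ai) * Bi * (D * Ai) = Ai * D * (Bi * D * Ai)"
      unfolding tr using Ai D Bi
        assoc_mult_mat[of "Ai * D" n n Bi n "D * Ai" n] assoc_mult_mat[OF Bi D Ai] by simp
    ultimately show ?thesis by simp
  qed
  have c1: "Ai * D * Ai \<in> carrier_mat n n" and c2: "Ai * D * (Bi * D * Ai) \<in> carrier_mat n n"
    using Ai D Bi by auto
  have t: "mtrace Bi - mtrace Ai = mtrace (Ai * D * Ai) + mtrace (Ai * D * (Bi * D * Ai))"
    using mtrace_minus[OF Bi Ai] mtrace_add[OF c1 c2] e3 by simp
  have t2: "0 \<le> mtrace (Ai * D * (Bi * D * Ai))" by (rule psd_trace_nonneg[OF ps2 c2])
  have t1: "0 < mtrace (Ai * D * Ai)"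
  proof (rule ccontr)
    assume "\<not> 0 < mtrace (Ai * D * Ai)"
    then have "mtrace (Ai * D * Ai) = 0" using psd_trace_nonneg[OF ps1 c1] by simp
    then have z: "Ai * D * Ai = 0\<^sub>m n n" by (rule psd_trace_zero[OF ps1 c1])
    have AD: "Ai * D \<in> carrier_mat n n" using Ai D by simp
    have "A * (Ai * D * Ai) * A = A * (Ai * D * Ai * A)"
      by (rule assoc_mult_mat[of _ n n _ n _ n], insert A c1, auto)
    also have "Ai * D * Ai * A = Ai * D * (Ai * A)"
      by (rule assoc_mult_mat[OF AD Ai A])
    also have "\<dots> = Ai * D" using mA right_mult_one_mat[OF AD] by simp
    also have "A * (Ai * D) = (A * Ai) * D"
      by (rule assoc_mult_mat[OF A Ai D, symmetric])
    also have "\<dots> = D" using mA left_mult_one_mat[OF D] by simp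
    finally have "D = A * (Ai * D * Ai) * A" by simp
    also have "\<dots> = 0\<^sub>m n n" unfolding z using A by simp
    finally have "D = 0\<^sub>m n n" .
    then have z2: "(A - B) $$ (i, j) = 0" if "i < n" "j < n" for i j
      unfolding D_def using that by simp
    have "A $$ (i, j) = B $$ (i, j)" if "i < n" "j < n" for i j
      using z2[OF that] that A B by simp
    then have "A = B" using A B by (intro eq_matI, auto)
    then show False using ne by simp
  qed
  show ?thesis using t t1 t2 unfolding Ai_def Bi_def by simp
qed

theorem mainTheorem1:
  fixes N M :: nat and K :: "real mat" and \<alpha>s :: "nat set"
  assumes "N \<ge> 2" and "1 \<le> M" and "M < N"
    and "K \<in> carrier_mat N N" and "pd_mat K"
    and "\<alpha>s \<subseteq> {0..<N}" and "card \<alpha>s = M"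
    and "\<forall>\<alpha>. \<alpha> \<subseteq> {0..<N} \<and> card \<alpha> = M \<longrightarrow>
           mtrace (minv (schur K \<alpha>)) \<le> mtrace (minv (schur K \<alpha>s))"
  shows "\<not> (\<exists>\<alpha>. \<alpha> \<subseteq> {0..<N} \<and> card \<alpha> = M \<and> loewner_lt (schur K \<alpha>) (schur K \<alpha>s))"
proof
  assume "\<exists>\<alpha>. \<alpha> \<subseteq> {0..<N} \<and> card \<alpha> = M \<and> loewner_lt (schur K \<alpha>) (schur K \<alpha>s)"
  then obtain \<alpha> where al: "\<alpha> \<subseteq> {0..<N}" "card \<alpha> = M" and lt: "loewner_lt (schur K \<alpha>) (schur K \<alpha>s)"
    by blast
  note sA = schur_pd[OF assms(4,5,6)]
  note sB = schur_pd[OF assms(4,5) al(1)]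
  have cA: "schur K \<alpha>s \<in> carrier_mat (N - M) (N - M)" using sA assms(7) by simp
  have cB: "schur K \<alpha> \<in> carrier_mat (N - M) (N - M)" using sB al(2) by simp
  have pA: "pd_mat (schur K \<alpha>s)" and pB: "pd_mat (schur K \<alpha>)" using sA sB by auto
  have ps: "psd_mat (schur K \<alpha>s - schur K \<alpha>)" and ne: "schur K \<alpha>s \<noteq> schur K \<alpha>"
    using lt unfolding loewner_lt_def loewner_le_def by auto
  have "mtrace (minv (schur K \<alpha>s)) < mtrace (minv (schur K \<alpha>))"
    by (rule loewner_trace[OF cA cB pA pB ps ne])
  moreover have "mtrace (minv (schur K \<alpha>)) \<le> mtrace (minv (schur K \<alpha>s))"
    using assms(8) al by blast
  ultimately show False by simp
qed

end
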